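(* Let $d\nu$ be a bounded non-negative measure on the unit circle $\mathbb{T}$ with covariance sequence $\mathbf{c}=(c_0,c_1,\dots)$, $c_k=\frac{1}{2\pi}\int_{-\pi}^{\pi}e^{-ik\theta}d\nu(\theta)$, and let $\delta$ be a weakly continuous metric on the set $\mathfrak{M}$ of bounded non-negative measures on $\mathbb{T}$. Then $\rho_\delta(\mathcal{F}_{\mathbf{c}_{0:n}})\to0$ as $n\to\infty$.
   Context: For $\mathbf{c}_{0:n}=(c_0,\dots,c_n)$, $\mathcal{F}_{\mathbf{c}_{0:n}}=\{d\mu\in\mathfrak{M}: \frac{1}{2\pi}\int_{-\pi}^{\pi}e^{-ik\theta}d\mu(\theta)=c_k,\ k=0,\dots,n\}$. The diameter of $\mathcal{F}\subset\mathfrak{M}$ is $\rho_\delta(\mathcal{F})=\sup\{\delta(d\mu_0,d\mu_1):d\mu_0,d\mu_1\in\mathcal{F}\}$. The weak topology on $\mathfrak{M}$: $d\mu_k\to d\mu$ iff $\int f d\mu_k\to\int f d\mu$ for all real continuous $f$ on $\mathbb{T}$; $\delta$ is weakly continuous if it is continuous on $\mathfrak{M}\times\mathfrak{M}$ for the weak topology. (A sequence $\mathbf{c}$ is called non-negative if all Toeplitz matrices $T_n=[c_{k-\ell}]_{k,\ell=0}^n$, with $c_{-k}=\bar c_k$, are positive semidefinite; these are exactly the covariance sequences of such measures.) *)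

theory Defs
  imports "HOL-Analysis.Analysis" "HOL-Library.Extended_Real"
begin

text \<open>The unit circle T, realised as the unit sphere in the complex plane with
  its Borel sigma-algebra; the point exp(i theta) corresponds to theta.\<close>
definition circle_space :: "complex measure" where
  "circle_space = restrict_space borel (sphere 0 1)"

definition Meas :: "complex measure set" where
  "Meas = {M. sets M = sets circle_space \<and> finite_measure M}"

text \<open>Covariance c_k = (1/2pi) int exp(-i k theta) dmu(theta); with z = exp(i theta),
  exp(-i k theta) = cnj z ^ k.\<close>
definition cov :: "complex measure \<Rightarrow> nat \<Rightarrow> complex" where
  "cov M k = (integral\<^sup>L M (\<lambda>z. cnj z ^ k)) / complex_of_real (2 * pi)"

definition Fam :: "(nat \<Rightarrow> complex) \<Rightarrow> nat \<Rightarrow> complex measure set" where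
  "Fam c n = {M \<in> Meas. \<forall>k\<le>n. cov M k = c k}"

definition weak_conv :: "(nat \<Rightarrow> complex measure) \<Rightarrow> complex measure \<Rightarrow> bool" where
  "weak_conv Ms M \<longleftrightarrow>
     (\<forall>f :: complex \<Rightarrow> real. continuous_on (sphere 0 1) f \<longrightarrow>
        (\<lambda>k. integral\<^sup>L (Ms k) f) \<longlonglongrightarrow> integral\<^sup>L M f)"

definition is_metric_on :: "'a set \<Rightarrow> ('a \<Rightarrow> 'a \<Rightarrow> real) \<Rightarrow> bool" where
  "is_metric_on S d \<longleftrightarrow>
     (\<forall>x\<in>S. \<forall>y\<in>S. 0 \<le> d x y \<and> (d x y = 0 \<longleftrightarrow> x = y) \<and> d x y = d y x) \<and>
     (\<forall>x\<in>S. \<forall>y\<in>S. \<forall>z\<in>S. d x z \<le> d x y + d y z)"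

definition weakly_continuous :: "(complex measure \<Rightarrow> complex measure \<Rightarrow> real) \<Rightarrow> bool" where
  "weakly_continuous d \<longleftrightarrow>
     (\<forall>Ms Ns M N. (\<forall>k. Ms k \<in> Meas \<and> Ns k \<in> Meas) \<and> M \<in> Meas \<and> N \<in> Meas \<and>
        weak_conv Ms M \<and> weak_conv Ns N \<longrightarrow>
        (\<lambda>k. d (Ms k) (Ns k)) \<longlonglongrightarrow> d M N)"

definition diam_delta :: "(complex measure \<Rightarrow> complex measure \<Rightarrow> real) \<Rightarrow> complex measure set \<Rightarrow> ereal" where
  "diam_delta d F = (SUP p \<in> F \<times> F. ereal (d (fst p) (snd p)))"

end

theory Submission
  imports Defs
begin

definition tp :: "(complex \<times> nat \<times> nat) list \<Rightarrow> complex \<Rightarrow> complex" where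
  "tp xs z = (\<Sum>(c,j,k)\<leftarrow>xs. c * z^j * cnj z^k)"

definition prodl :: "(complex \<times> nat \<times> nat) list \<Rightarrow> (complex \<times> nat \<times> nat) list \<Rightarrow> (complex \<times> nat \<times> nat) list" where
  "prodl xs ys = concat (map (\<lambda>(c,j,k). map (\<lambda>(d,j',k'). (c*d, j+j', k+k')) ys) xs)"

definition conjl :: "(complex \<times> nat \<times> nat) list \<Rightarrow> (complex \<times> nat \<times> nat) list" where
  "conjl ys = map (\<lambda>(d,j,k). (cnj d, k, j)) ys"

definition scl :: "complex \<Rightarrow> (complex \<times> nat \<times> nat) list \<Rightarrow> (complex \<times> nat \<times> nat) list" where
  "scl r ys = map (\<lambda>(d,j,k). (r * d, j, k)) ys"

lemma tp_Nil[simp]: "tp [] z = 0" by (simp add: tp_def)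
lemma tp_Cons[simp]: "tp ((c,j,k)#xs) z = c * z^j * cnj z^k + tp xs z" by (simp add: tp_def)
lemma tp_append[simp]: "tp (xs @ ys) z = tp xs z + tp ys z" by (simp add: tp_def)

lemma tp_conjl: "tp (conjl ys) z = cnj (tp ys z)"
  by (induction ys) (auto simp: conjl_def)

lemma tp_scl: "tp (scl r ys) z = r * tp ys z"
  by (induction ys) (auto simp: scl_def algebra_simps)

lemma tp_prodl: "tp (prodl xs ys) z = tp xs z * tp ys z"
proof (induction xs)
  case Nil then show ?case by (simp add: prodl_def)
next
  case (Cons x xs)
  obtain c j k where x: "x = (c,j,k)" by (cases x) auto
  have "tp (map (\<lambda>(d,j',k'). (c*d, j+j', k+k')) ys) z = c * z^j * cnj z^k * tp ys z" for ys
    by (induction ys) (auto simp: algebra_simps power_add)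
  then show ?case using Cons by (simp add: prodl_def x algebra_simps)
qed

lemma tp_cont: "continuous_on A (tp xs)"
proof (induction xs)
  case Nil then show ?case by (simp add: tp_def[abs_def])
next
  case (Cons x xs)
  obtain c j k where x: "x = (c,j,k)" by (cases x) auto
  have e: "tp (x#xs) = (\<lambda>z. c * z^j * cnj z^k + tp xs z)" using x by auto
  show ?case unfolding e by (intro continuous_intros Cons)
qed

definition Ptp :: "(complex \<Rightarrow> real) \<Rightarrow> bool" where
  "Ptp g \<longleftrightarrow> (\<exists>xs. g = (\<lambda>z. Re (tp xs z)))"

lemma Ptp_approx:
  assumes "continuous_on (sphere 0 1) f" "0 < e"
  shows "\<exists>g. Ptp g \<and> (\<forall>x \<in> sphere 0 1. \<bar>f x - g x\<bar> < e)"
proof (rule Stone_Weierstrass_HOL[OF compact_sphere _ _ _ _ _ assms])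
  fix c :: real
  show "Ptp (\<lambda>x. c)" unfolding Ptp_def by (rule exI[of _ "[(of_real c,0,0)]"]) simp
next
  fix f :: "complex \<Rightarrow> real" assume "Ptp f"
  then obtain xs where "f = (\<lambda>z. Re (tp xs z))" by (auto simp: Ptp_def)
  then show "continuous_on (sphere 0 1) f"
    by (auto intro!: continuous_on_Re[OF tp_cont])
next
  fix f g :: "complex \<Rightarrow> real" assume "Ptp f \<and> Ptp g"
  then obtain xs ys where f: "f = (\<lambda>z. Re (tp xs z))" and g: "g = (\<lambda>z. Re (tp ys z))"
    by (auto simp: Ptp_def)
  show "Ptp (\<lambda>x. f x + g x)" unfolding Ptp_def f g
    by (rule exI[of _ "xs @ ys"]) simp
  have "f z * g z = Re (tp (scl (1/2) (prodl xs ys @ prodl xs (conjl ys))) z)" for z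
    unfolding f g tp_scl tp_append tp_prodl tp_conjl
    by (simp add: field_simps)
  then show "Ptp (\<lambda>x. f x * g x)" unfolding Ptp_def by blast
next
  fix x y :: complex assume "x \<in> sphere 0 1 \<and> y \<in> sphere 0 1 \<and> x \<noteq> y"
  then have "Re x \<noteq> Re y \<or> Im x \<noteq> Im y" using complex_eqI by blast
  moreover have "Ptp Re" unfolding Ptp_def by (rule exI[of _ "[(1,1,0)]"]) simp
  moreover have "Ptp Im" unfolding Ptp_def by (rule exI[of _ "[(-\<i>,1,0)]"]) simp
  ultimately show "\<exists>f. Ptp f \<and> f x \<noteq> f y" by blast
qed

lemma Meas_space: "M \<in> Meas \<Longrightarrow> space M = sphere 0 1"
  unfolding Meas_def circle_space_def
  by (auto dest!: sets_eq_imp_space_eq simp: space_restrict_space)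

lemma Meas_finite: "M \<in> Meas \<Longrightarrow> finite_measure M"
  unfolding Meas_def by auto

lemma Meas_meas:
  assumes "M \<in> Meas" "continuous_on (sphere 0 1) f"
  shows "f \<in> borel_measurable M"
proof -
  have "f \<in> borel_measurable circle_space"
    unfolding circle_space_def by (rule borel_measurable_continuous_on_restrict[OF assms(2)])
  moreover have "sets M = sets circle_space" using assms(1) by (simp add: Meas_def)
  ultimately show ?thesis using measurable_cong_sets by blast
qed

lemma Meas_int:
  fixes f :: "complex \<Rightarrow> 'b::{banach,second_countable_topology}"
  assumes "M \<in> Meas" "continuous_on (sphere 0 1) f"
  shows "integrable M f"
proof -
  interpret finite_measure M using Meas_finite[OF assms(1)] .
  have "compact (f ` sphere 0 1)" by (rule compact_continuous_image[OF assms(2) compact_sphere])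
  then obtain B where B: "\<forall>x\<in>f ` sphere 0 1. norm x \<le> B"
    using compact_imp_bounded bounded_iff by metis
  show ?thesis
    by (rule integrable_const_bound[where B=B]) (use B Meas_space[OF assms(1)] Meas_meas[OF assms] in auto)
qed

lemma mono_int:
  assumes "M \<in> Meas"
  shows "integral\<^sup>L M (\<lambda>z. z^j * cnj z^k) =
    (if j \<le> k then of_real (2*pi) * cov M (k-j) else cnj (of_real (2*pi) * cov M (j-k)))"
proof -
  have cv: "integral\<^sup>L M (\<lambda>z. cnj z ^ n) = of_real (2*pi) * cov M n" for n
    unfolding cov_def by simp
  have one: "z * cnj z = 1" if "z \<in> sphere 0 1" for z
    using that complex_norm_square[of z] by simp
  show ?thesis
  proof (cases "j \<le> k")
    case True
    have "integral\<^sup>L M (\<lambda>z. z^j * cnj z^k) = integral\<^sup>L M (\<lambda>z. cnj z ^ (k-j))"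
    proof (rule Bochner_Integration.integral_cong[OF refl])
      fix z assume "z \<in> space M"
      then have "z * cnj z = 1" using one Meas_space[OF assms] by auto
      have "z^j * cnj z^k = (z * cnj z)^j * cnj z^(k-j)"
        using True by (simp add: power_mult_distrib power_add[symmetric])
      then show "z^j * cnj z^k = cnj z ^ (k-j)" using \<open>z * cnj z = 1\<close> by simp
    qed
    then show ?thesis using True cv by simp
  next
    case False
    have "integral\<^sup>L M (\<lambda>z. z^j * cnj z^k) = integral\<^sup>L M (\<lambda>z. cnj (cnj z ^ (j-k)))"
    proof (rule Bochner_Integration.integral_cong[OF refl])
      fix z assume "z \<in> space M"
      then have "z * cnj z = 1" using one Meas_space[OF assms] by auto
      have "z^j * cnj z^k = z^(j-k) * (z * cnj z)^k"
        using False by (simp add: power_mult_distrib power_add[symmetric])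
      then show "z^j * cnj z^k = cnj (cnj z ^ (j-k))" using \<open>z * cnj z = 1\<close> by simp
    qed
    then show ?thesis using False cv[of "j-k"] by (simp only: Bochner_Integration.integral_cnj) simp
  qed
qed

lemma tp_int_eq:
  assumes "M \<in> Meas" "N \<in> Meas" "\<forall>n\<le>D. cov M n = cov N n"
    "\<forall>(c,j,k)\<in>set xs. j + k \<le> D"
  shows "integral\<^sup>L M (tp xs) = integral\<^sup>L N (tp xs)"
  using assms(4)
proof (induction xs)
  case Nil
  then show ?case by (simp add: tp_def[abs_def])
next
  case (Cons x xs)
  obtain c j k where x: "x = (c,j,k)" by (cases x) auto
  have e: "tp (x#xs) = (\<lambda>z. c * (z^j * cnj z^k) + tp xs z)" using x by (auto simp: algebra_simps)
  have jk: "j + k \<le> D" using Cons.prems x by auto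
  have L: "integral\<^sup>L L (tp (x#xs)) = c * integral\<^sup>L L (\<lambda>z. z^j * cnj z^k) + integral\<^sup>L L (tp xs)"
    if "L \<in> Meas" for L
    unfolding e
    by (subst Bochner_Integration.integral_add)
      (auto intro!: Meas_int[OF that] continuous_intros tp_cont)
  have mo: "integral\<^sup>L M (\<lambda>z. z^j * cnj z^k) = integral\<^sup>L N (\<lambda>z. z^j * cnj z^k)"
    unfolding mono_int[OF assms(1)] mono_int[OF assms(2)] using assms(3) jk by auto
  have ih: "integral\<^sup>L M (tp xs) = integral\<^sup>L N (tp xs)"
    by (rule Cons.IH) (use Cons.prems in auto)
  show ?case unfolding L[OF assms(1)] L[OF assms(2)] mo ih ..
qed

lemma Re_int:
  assumes "M \<in> Meas"
  shows "integral\<^sup>L M (\<lambda>z. Re (tp xs z)) = Re (integral\<^sup>L M (tp xs))"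
  by (rule integral_bounded_linear[OF bounded_linear_Re Meas_int[OF assms tp_cont]])

lemma bnd:
  assumes "M \<in> Meas" "continuous_on (sphere 0 1) h" "\<forall>z\<in>sphere 0 1. \<bar>h z\<bar> \<le> e"
  shows "\<bar>integral\<^sup>L M h\<bar> \<le> e * measure M (space M)"
proof -
  have "\<bar>integral\<^sup>L M h\<bar> \<le> integral\<^sup>L M (\<lambda>z. \<bar>h z\<bar>)"
    using integral_norm_bound[of M h] by simp
  also have "\<dots> \<le> integral\<^sup>L M (\<lambda>z. e)"
    by (rule integral_mono)
      (use assms Meas_space[OF assms(1)] Meas_finite[OF assms(1)] in
        \<open>auto intro!: Meas_int continuous_intros finite_measure.integrable_const\<close>)
  also have "\<dots> = e * measure M (space M)" by simp
  finally show ?thesis .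
qed

lemma weak:
  assumes nu: "\<nu> \<in> Meas" and Ms: "\<forall>n. Ms n \<in> Fam (cov \<nu>) n"
  shows "weak_conv Ms \<nu>"
  unfolding weak_conv_def
proof (intro allI impI LIMSEQ_I)
  fix f :: "complex \<Rightarrow> real" and r :: real
  assume f: "continuous_on (sphere 0 1) f" and r: "0 < r"
  define m where "m = measure \<nu> (space \<nu>)"
  have m0: "0 \<le> m" unfolding m_def by simp
  define e where "e = r / (2*m+1)"
  have e0: "0 < e" using m0 r by (simp add: e_def)
  have em: "2 * e * m < r" using m0 r unfolding e_def by (simp add: field_simps)
  obtain g where "Ptp g" and g: "\<forall>x\<in>sphere 0 1. \<bar>f x - g x\<bar> < e"
    using Ptp_approx[OF f e0] by blast
  then obtain xs where gxs: "g = (\<lambda>z. Re (tp xs z))" by (auto simp: Ptp_def)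
  define D where "D = (\<Sum>(c,j,k)\<leftarrow>xs. j + k)"
  have Dxs: "\<forall>(c,j,k)\<in>set xs. j + k \<le> D"
  proof (clarify)
    fix c j k assume "(c,j,k) \<in> set xs"
    then have "j + k \<in> set (map (\<lambda>(c,j,k). j + k) xs)" by force
    then show "j + k \<le> D" unfolding D_def by (rule member_le_sum_list) simp
  qed
  show "\<exists>no. \<forall>n\<ge>no. norm (integral\<^sup>L (Ms n) f - integral\<^sup>L \<nu> f) < r"
  proof (intro exI allI impI)
    fix n assume n: "D \<le> n"
    have M: "Ms n \<in> Meas" and cv: "\<forall>k\<le>n. cov (Ms n) k = cov \<nu> k"
      using Ms by (auto simp: Fam_def)
    have cvD: "\<forall>k\<le>D. cov (Ms n) k = cov \<nu> k" using cv n by auto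
    have "cov (Ms n) 0 = cov \<nu> 0" using cv by auto
    then have "measure (Ms n) (space (Ms n)) = m"
      unfolding cov_def m_def by simp
    have gc: "continuous_on (sphere 0 1) g" unfolding gxs
      by (intro continuous_on_Re tp_cont)
    have geq: "integral\<^sup>L (Ms n) g = integral\<^sup>L \<nu> g"
      unfolding gxs Re_int[OF M] Re_int[OF nu] tp_int_eq[OF M nu cvD Dxs] ..
    have b1: "\<bar>integral\<^sup>L (Ms n) (\<lambda>z. f z - g z)\<bar> \<le> e * m"
      using bnd[OF M, of "\<lambda>z. f z - g z" e] g f gc \<open>measure (Ms n) (space (Ms n)) = m\<close>
      by (auto intro!: continuous_intros simp: less_imp_le)
    have b2: "\<bar>integral\<^sup>L \<nu> (\<lambda>z. f z - g z)\<bar> \<le> e * m"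
      using bnd[OF nu, of "\<lambda>z. f z - g z" e] g f gc unfolding m_def
      by (auto intro!: continuous_intros simp: less_imp_le)
    have "integral\<^sup>L (Ms n) (\<lambda>z. f z - g z) = integral\<^sup>L (Ms n) f - integral\<^sup>L (Ms n) g"
      by (rule Bochner_Integration.integral_diff) (auto intro!: Meas_int[OF M] f gc)
    moreover have "integral\<^sup>L \<nu> (\<lambda>z. f z - g z) = integral\<^sup>L \<nu> f - integral\<^sup>L \<nu> g"
      by (rule Bochner_Integration.integral_diff) (auto intro!: Meas_int[OF nu] f gc)
    ultimately show "norm (integral\<^sup>L (Ms n) f - integral\<^sup>L \<nu> f) < r"
      using b1 b2 geq em by simp
  qed
qed

theorem corollary2:
  fixes \<nu> :: "complex measure" and \<delta> :: "complex measure \<Rightarrow> complex measure \<Rightarrow> real"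
  assumes "\<nu> \<in> Meas"
    and "is_metric_on Meas \<delta>"
    and "weakly_continuous \<delta>"
  shows "(\<lambda>n. diam_delta \<delta> (Fam (cov \<nu>) n)) \<longlonglongrightarrow> 0"
proof -
  define D where "D n = diam_delta \<delta> (Fam (cov \<nu>) n)" for n
  have nuF: "\<nu> \<in> Fam (cov \<nu>) n" for n using assms(1) by (simp add: Fam_def)
  have d00: "\<delta> \<nu> \<nu> = 0" using assms(1,2) by (simp add: is_metric_on_def)
  have D0: "0 \<le> D n" for n
    unfolding D_def diam_delta_def
    by (rule SUP_upper2[of "(\<nu>,\<nu>)"]) (use nuF d00 in auto)
  have anti: "D m \<le> D n" if "n \<le> m" for n m
  proof -
    have "Fam (cov \<nu>) m \<subseteq> Fam (cov \<nu>) n" using that by (auto simp: Fam_def)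
    then show ?thesis unfolding D_def diam_delta_def
      by (intro SUP_subset_mono) auto
  qed
  have "D \<longlonglongrightarrow> 0"
  proof (rule order_tendstoI)
    fix a :: ereal assume "a < 0"
    then show "\<forall>\<^sub>F n in sequentially. a < D n" using D0 by (intro always_eventually allI) (blast intro: less_le_trans)
  next
    fix a :: ereal assume a: "0 < a"
    show "\<forall>\<^sub>F n in sequentially. D n < a"
    proof (rule ccontr)
      assume ne: "\<not> ?thesis"
      have all: "a \<le> D n" for n
      proof (rule ccontr)
        assume "\<not> a \<le> D n"
        then have "D n < a" by simp
        then have "\<forall>\<^sub>F m in sequentially. D m < a"
          by (intro eventually_sequentiallyI[of n]) (use anti in \<open>blast intro: le_less_trans\<close>)
        then show False using ne by simp
      qed
      obtain b where b: "0 < ereal b" "ereal b < a" using ereal_dense2[OF a] by auto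
      have "\<exists>p\<in>Fam (cov \<nu>) n \<times> Fam (cov \<nu>) n. ereal b < ereal (\<delta> (fst p) (snd p))" for n
        using less_le_trans[OF b(2) all[of n]] unfolding D_def diam_delta_def less_SUP_iff .
      then have "\<forall>n. \<exists>p. p \<in> Fam (cov \<nu>) n \<times> Fam (cov \<nu>) n \<and> b < \<delta> (fst p) (snd p)"
        by fastforce
      then have "\<exists>P. \<forall>n. P n \<in> Fam (cov \<nu>) n \<times> Fam (cov \<nu>) n \<and> b < \<delta> (fst (P n)) (snd (P n))"
        by (rule choice)
      then obtain P where P: "\<And>n. P n \<in> Fam (cov \<nu>) n \<times> Fam (cov \<nu>) n \<and> b < \<delta> (fst (P n)) (snd (P n))"
        by blast
      have w1: "weak_conv (\<lambda>n. fst (P n)) \<nu>" using P by (intro weak assms(1)) (simp add: mem_Times_iff)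
      have w2: "weak_conv (\<lambda>n. snd (P n)) \<nu>" using P by (intro weak assms(1)) (simp add: mem_Times_iff)
      have "(\<lambda>n. \<delta> (fst (P n)) (snd (P n))) \<longlonglongrightarrow> \<delta> \<nu> \<nu>"
      proof -
        have "\<forall>k. fst (P k) \<in> Meas \<and> snd (P k) \<in> Meas"
          using P by (simp add: mem_Times_iff Fam_def)
        then show ?thesis using assms(3) unfolding weakly_continuous_def
          using w1 w2 assms(1)
          by (auto dest!: spec[of _ "\<lambda>n. fst (P n)"] spec[of _ "\<lambda>n. snd (P n)"] spec[of _ \<nu>])
      qed
      then have "\<forall>\<^sub>F n in sequentially. \<delta> (fst (P n)) (snd (P n)) < b"
        using d00 b(1) by (intro order_tendstoD(2)) auto
      then obtain n where "\<delta> (fst (P n)) (snd (P n)) < b" by (auto dest: eventually_happens)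
      then show False using P[of n] by simp
    qed
  qed
  then show ?thesis unfolding D_def .
qed

end
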